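(* Let $G$ be a countable discrete group acting minimally by homeomorphisms on a compact Hausdorff space $X$, and let $\mu\in P(G,C(X))$ have full support. Then every $\mu$-stationary state on $C(X)$ is faithful.
   Context: Minimal means every orbit is dense; $(g\cdot f)(x)=f(g^{-1}x)$. A generalized $(G,C(X))$-probability measure is a formal sum $\mu=\sum_{i\in I}f_is_if_i$ with $I$ an index set, $s_i\in G$ (repetitions allowed), $f_i\in C(X)$, $f_i\ge0$, $f_i\ne0$, $\sum_if_i^2=1$; $P(G,C(X))$ is the set of these. For $h\in C(X)$, $\mu h=\sum_if_i(s_i\cdot h)f_i$; a state $\tau$ on $C(X)$ is $\mu$-stationary if $\tau(\mu h)=\tau(h)$ for all $h$. $\mu$ has full support if, writing $I_s=\{i: s_i=s\}$, for each $s\in G$ there is $\delta>0$ with $\sum_{i\in I_s}f_i^2\ge\delta$ (equivalently, for all $s\in G$, $x\in X$ there is $i\in I_s$ with $f_i(x)>0$). *)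

theory Defs
  imports "HOL-Analysis.Analysis"
begin

text \<open>A group G (written additively via the type class group_add, so the
group inverse of g is -g) acting on X by act.\<close>

definition group_action :: "('g::group_add \<Rightarrow> 'x \<Rightarrow> 'x) \<Rightarrow> bool" where
  "group_action act \<longleftrightarrow> (\<forall>x. act 0 x = x) \<and> (\<forall>g h x. act (g + h) x = act g (act h x))"

text \<open>Action by homeomorphisms: each act g is continuous (its inverse act (-g) is then
continuous as well).\<close>
definition action_by_homeos :: "('g::group_add \<Rightarrow> 'x::topological_space \<Rightarrow> 'x) \<Rightarrow> bool" where
  "action_by_homeos act \<longleftrightarrow> group_action act \<and> (\<forall>g. continuous_on UNIV (act g))"

definition minimal_action :: "('g \<Rightarrow> 'x::topological_space \<Rightarrow> 'x) \<Rightarrow> bool" where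
  "minimal_action act \<longleftrightarrow> (\<forall>x. closure (range (\<lambda>g. act g x)) = UNIV)"

definition translate :: "('g::group_add \<Rightarrow> 'x \<Rightarrow> 'x) \<Rightarrow> 'g \<Rightarrow> ('x \<Rightarrow> 'a) \<Rightarrow> ('x \<Rightarrow> 'a)" where
  "translate act g h = (\<lambda>x. h (act (-g) x))"

text \<open>Generalized (G,C(X))-probability measure mu = sum_{i in I} f_i s_i f_i.
The identity sum_i f_i^2 = 1 in C(X) is stated pointwise (for nonnegative continuous
functions on a compact space this is equivalent to norm convergence by Dini).\<close>
definition gen_prob_measure ::
  "'i set \<Rightarrow> ('i \<Rightarrow> 'g) \<Rightarrow> ('i \<Rightarrow> 'x::topological_space \<Rightarrow> real) \<Rightarrow> bool" where
  "gen_prob_measure I s f \<longleftrightarrow>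
     (\<forall>i\<in>I. continuous_on UNIV (f i) \<and> (\<forall>x. f i x \<ge> 0) \<and> f i \<noteq> (\<lambda>x. 0)) \<and>
     (\<forall>x. ((\<lambda>i. (f i x)\<^sup>2) has_sum 1) I)"

definition mu_apply ::
  "('g::group_add \<Rightarrow> 'x \<Rightarrow> 'x) \<Rightarrow> 'i set \<Rightarrow> ('i \<Rightarrow> 'g) \<Rightarrow> ('i \<Rightarrow> 'x \<Rightarrow> real)
     \<Rightarrow> ('x \<Rightarrow> complex) \<Rightarrow> ('x \<Rightarrow> complex)" where
  "mu_apply act I s f h =
     (\<lambda>x. \<Sum>\<^sub>\<infinity>i\<in>I. complex_of_real (f i x) * translate act (s i) h x * complex_of_real (f i x))"

definition full_support :: "'i set \<Rightarrow> ('i \<Rightarrow> 'g) \<Rightarrow> ('i \<Rightarrow> 'x \<Rightarrow> real) \<Rightarrow> bool" where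
  "full_support I s f \<longleftrightarrow>
     (\<forall>g. \<exists>\<delta>>0. \<forall>x. (\<Sum>\<^sub>\<infinity>i\<in>{i\<in>I. s i = g}. (f i x)\<^sup>2) \<ge> \<delta>)"

text \<open>A state on the C*-algebra C(X) (complex-valued continuous functions):
linear, positive, unital functional. Only its values on continuous functions matter.\<close>
definition is_state :: "(('x::topological_space \<Rightarrow> complex) \<Rightarrow> complex) \<Rightarrow> bool" where
  "is_state \<tau> \<longleftrightarrow>
     (\<forall>a b h k. continuous_on UNIV h \<longrightarrow> continuous_on UNIV k \<longrightarrow>
        \<tau> (\<lambda>x. a * h x + b * k x) = a * \<tau> h + b * \<tau> k) \<and>
     (\<forall>h. continuous_on UNIV h \<longrightarrow> (\<forall>x. Im (h x) = 0 \<and> Re (h x) \<ge> 0) \<longrightarrow>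
        Im (\<tau> h) = 0 \<and> Re (\<tau> h) \<ge> 0) \<and>
     \<tau> (\<lambda>x. 1) = 1"

definition stationary_state ::
  "('g::group_add \<Rightarrow> 'x::topological_space \<Rightarrow> 'x) \<Rightarrow> 'i set \<Rightarrow> ('i \<Rightarrow> 'g) \<Rightarrow> ('i \<Rightarrow> 'x \<Rightarrow> real)
     \<Rightarrow> (('x \<Rightarrow> complex) \<Rightarrow> complex) \<Rightarrow> bool" where
  "stationary_state act I s f \<tau> \<longleftrightarrow> is_state \<tau> \<and>
     (\<forall>h. continuous_on UNIV h \<longrightarrow> \<tau> (mu_apply act I s f h) = \<tau> h)"

definition faithful_state :: "(('x::topological_space \<Rightarrow> complex) \<Rightarrow> complex) \<Rightarrow> bool" where
  "faithful_state \<tau> \<longleftrightarrow>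
     (\<forall>h. continuous_on UNIV h \<longrightarrow> \<tau> (\<lambda>x. cnj (h x) * h x) = 0 \<longrightarrow> h = (\<lambda>x. 0))"

end

theory Submission
  imports Defs
begin



lemma finite_approx:
  fixes f :: "'i \<Rightarrow> 'x::topological_space \<Rightarrow> real"
  assumes cpt: "compact (UNIV :: 'x set)"
    and cont: "\<And>i. i \<in> I \<Longrightarrow> continuous_on UNIV (f i)"
    and hs: "\<And>x. ((\<lambda>i. (f i x)\<^sup>2) has_sum 1) I"
    and e: "e > 0"
  shows "\<exists>F. finite F \<and> F \<subseteq> I \<and> (\<forall>x. 1 - e < (\<Sum>i\<in>F. (f i x)\<^sup>2))"
proof -
  have "\<exists>F. finite F \<and> F \<subseteq> I \<and> 1 - e < (\<Sum>i\<in>F. (f i x)\<^sup>2)" for x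
  proof -
    have "((\<lambda>F. \<Sum>i\<in>F. (f i x)\<^sup>2) \<longlongrightarrow> 1) (finite_subsets_at_top I)"
      using hs[of x] by (simp add: has_sum_def)
    then have "eventually (\<lambda>F. 1 - e < (\<Sum>i\<in>F. (f i x)\<^sup>2)) (finite_subsets_at_top I)"
      using e by (intro order_tendstoD(1)) auto
    then show ?thesis unfolding eventually_finite_subsets_at_top by blast
  qed
  then obtain Fx where Fx: "\<And>x. finite (Fx x) \<and> Fx x \<subseteq> I \<and> 1 - e < (\<Sum>i\<in>Fx x. (f i x)\<^sup>2)"
    by metis
  define U where "U x = {y. 1 - e < (\<Sum>i\<in>Fx x. (f i y)\<^sup>2)}" for x
  have opn: "open (U x)" for x
    unfolding U_def
  proof (rule open_Collect_less)
    show "continuous_on UNIV (\<lambda>y. (\<Sum>i\<in>Fx x. (f i y)\<^sup>2))"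
      using Fx cont by (intro continuous_intros) auto
  qed (intro continuous_intros)
  have "UNIV \<subseteq> (\<Union>x\<in>UNIV. U x)" using Fx unfolding U_def by auto
  then obtain D where D: "finite D" "UNIV \<subseteq> (\<Union>x\<in>D. U x)"
    using compactE_image[OF cpt, of UNIV U] opn by (metis UNIV_I)
  define F where "F = (\<Union>x\<in>D. Fx x)"
  have "finite F" "F \<subseteq> I" using D Fx unfolding F_def by auto
  moreover have "1 - e < (\<Sum>i\<in>F. (f i y)\<^sup>2)" for y
  proof -
    obtain x where x: "x \<in> D" "y \<in> U x" using D by blast
    have "1 - e < (\<Sum>i\<in>Fx x. (f i y)\<^sup>2)" using x unfolding U_def by auto
    also have "\<dots> \<le> (\<Sum>i\<in>F. (f i y)\<^sup>2)"
      using x \<open>finite F\<close> by (intro sum_mono2) (auto simp: F_def)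
    finally show ?thesis .
  qed
  ultimately show ?thesis by blast
qed



lemma tail_bound:
  fixes f :: "'i \<Rightarrow> real" and v :: "'i \<Rightarrow> real"
  assumes hs: "((\<lambda>i. (f i)\<^sup>2) has_sum 1) I"
    and v: "\<And>i. i \<in> I \<Longrightarrow> 0 \<le> v i \<and> v i \<le> B"
    and F: "finite F" "F \<subseteq> I"
  shows "(\<lambda>i. (f i)\<^sup>2 * v i) summable_on I"
    and "0 \<le> (\<Sum>\<^sub>\<infinity>i\<in>I. (f i)\<^sup>2 * v i) - (\<Sum>i\<in>F. (f i)\<^sup>2 * v i)"
    and "(\<Sum>\<^sub>\<infinity>i\<in>I. (f i)\<^sup>2 * v i) - (\<Sum>i\<in>F. (f i)\<^sup>2 * v i) \<le> B * (1 - (\<Sum>i\<in>F. (f i)\<^sup>2))"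
proof -
  have s1: "(\<lambda>i. (f i)\<^sup>2) summable_on I" using hs by (auto simp: summable_on_def)
  have sB: "(\<lambda>i. B * (f i)\<^sup>2) summable_on A" if "A \<subseteq> I" for A
    using summable_on_subset[OF s1 that] by (rule summable_on_cmult_right)
  have sA: "(\<lambda>i. (f i)\<^sup>2 * v i) summable_on A" if "A \<subseteq> I" for A
    using sB[OF that] by (rule summable_on_comparison_test) (use v that in \<open>auto simp: mult.commute mult_right_mono\<close>)
  show "(\<lambda>i. (f i)\<^sup>2 * v i) summable_on I" using sA by simp
  have IU: "I = F \<union> (I - F)" using F by auto
  have e1: "(\<Sum>\<^sub>\<infinity>i\<in>I. (f i)\<^sup>2 * v i) = (\<Sum>i\<in>F. (f i)\<^sup>2 * v i) + (\<Sum>\<^sub>\<infinity>i\<in>I-F. (f i)\<^sup>2 * v i)"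
    apply (subst IU) apply (subst infsum_Un_disjoint) using F sA by auto
  have e2: "(\<Sum>\<^sub>\<infinity>i\<in>I. (f i)\<^sup>2) = (\<Sum>i\<in>F. (f i)\<^sup>2) + (\<Sum>\<^sub>\<infinity>i\<in>I-F. (f i)\<^sup>2)"
    apply (subst IU) apply (subst infsum_Un_disjoint) using F s1 summable_on_subset[OF s1] by auto
  have one: "(\<Sum>\<^sub>\<infinity>i\<in>I. (f i)\<^sup>2) = 1" using hs by (rule infsumI)
  have "0 \<le> (\<Sum>\<^sub>\<infinity>i\<in>I-F. (f i)\<^sup>2 * v i)" using v by (intro infsum_nonneg) auto
  then show "0 \<le> (\<Sum>\<^sub>\<infinity>i\<in>I. (f i)\<^sup>2 * v i) - (\<Sum>i\<in>F. (f i)\<^sup>2 * v i)" using e1 by simp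
  have "(\<Sum>\<^sub>\<infinity>i\<in>I-F. (f i)\<^sup>2 * v i) \<le> (\<Sum>\<^sub>\<infinity>i\<in>I-F. B * (f i)\<^sup>2)"
    using sA sB v by (intro infsum_mono) (auto simp: mult.commute mult_right_mono)
  also have "\<dots> = B * (\<Sum>\<^sub>\<infinity>i\<in>I-F. (f i)\<^sup>2)" by (rule infsum_cmult_right') 
  finally have c: "(\<Sum>\<^sub>\<infinity>i\<in>I-F. (f i)\<^sup>2 * v i) \<le> B * (\<Sum>\<^sub>\<infinity>i\<in>I-F. (f i)\<^sup>2)" .
  have e3: "(\<Sum>\<^sub>\<infinity>i\<in>I-F. (f i)\<^sup>2) = 1 - (\<Sum>i\<in>F. (f i)\<^sup>2)" using e2 one by linarith
  show "(\<Sum>\<^sub>\<infinity>i\<in>I. (f i)\<^sup>2 * v i) - (\<Sum>i\<in>F. (f i)\<^sup>2 * v i) \<le> B * (1 - (\<Sum>i\<in>F. (f i)\<^sup>2))"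
    using e1 e3 c by simp
qed

lemma cont_mu:
  fixes f :: "'i \<Rightarrow> 'x::topological_space \<Rightarrow> real" and v :: "'i \<Rightarrow> 'x \<Rightarrow> real"
  assumes cpt: "compact (UNIV :: 'x set)"
    and cont: "\<And>i. i \<in> I \<Longrightarrow> continuous_on UNIV (f i)"
    and hs: "\<And>x. ((\<lambda>i. (f i x)\<^sup>2) has_sum 1) I"
    and vc: "\<And>i. i \<in> I \<Longrightarrow> continuous_on UNIV (v i)"
    and v: "\<And>i x. i \<in> I \<Longrightarrow> 0 \<le> v i x \<and> v i x \<le> B"
  shows "continuous_on UNIV (\<lambda>x. \<Sum>\<^sub>\<infinity>i\<in>I. (f i x)\<^sup>2 * v i x)"
proof -
  have B0: "0 \<le> B" if "I \<noteq> {}" using v that by (meson ex_in_conv order_trans)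
  define ep where "ep n = inverse (real (Suc n)) / (\<bar>B\<bar> + 1)" for n
  have ep: "ep n > 0" for n unfolding ep_def by (auto intro!: divide_pos_pos)
  have "\<exists>F. finite F \<and> F \<subseteq> I \<and> (\<forall>x. 1 - ep n < (\<Sum>i\<in>F. (f i x)\<^sup>2))" for n
    by (rule finite_approx[OF cpt cont hs ep])
  then obtain Fn where Fn: "\<And>n. finite (Fn n) \<and> Fn n \<subseteq> I \<and> (\<forall>x. 1 - ep n < (\<Sum>i\<in>Fn n. (f i x)\<^sup>2))"
    by metis
  define P where "P n x = (\<Sum>i\<in>Fn n. (f i x)\<^sup>2 * v i x)" for n x
  have Pc: "continuous_on UNIV (P n)" for n
    unfolding P_def using Fn[of n] cont vc by (intro continuous_intros) auto
  have bnd: "dist (P n x) (\<Sum>\<^sub>\<infinity>i\<in>I. (f i x)\<^sup>2 * v i x) < inverse (real (Suc n))" for n x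
  proof -
    have t1: "0 \<le> (\<Sum>\<^sub>\<infinity>i\<in>I. (f i x)\<^sup>2 * v i x) - P n x"
      and t2: "(\<Sum>\<^sub>\<infinity>i\<in>I. (f i x)\<^sup>2 * v i x) - P n x \<le> B * (1 - (\<Sum>i\<in>Fn n. (f i x)\<^sup>2))"
      unfolding P_def using tail_bound[OF hs[of x], of "\<lambda>i. v i x" B "Fn n"] v Fn by auto
    show ?thesis
    proof (cases "I = {}")
      case True then show ?thesis using Fn[of n] by (simp add: P_def)
    next
      case False
      then have "0 \<le> B" by (rule B0)
      have "B * (1 - (\<Sum>i\<in>Fn n. (f i x)\<^sup>2)) \<le> B * ep n"
        using Fn[of n] \<open>0 \<le> B\<close> by (intro mult_left_mono) (auto simp: less_imp_le dest: spec[of _ x])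
      also have "\<dots> < inverse (real (Suc n))"
      proof -
        define a where "a = inverse (real (Suc n))"
        have a: "a > 0" unfolding a_def by simp
        have "a * B < a * (B + 1)" using a by simp
        then have "a * B / (B + 1) < a" using \<open>0 \<le> B\<close> by (simp add: pos_divide_less_eq)
        then show ?thesis unfolding ep_def a_def[symmetric] using \<open>0 \<le> B\<close> by (simp add: mult.commute)
      qed
      finally show ?thesis using t1 t2 by (simp add: dist_real_def)
    qed
  qed
  have ul: "uniform_limit UNIV P (\<lambda>x. \<Sum>\<^sub>\<infinity>i\<in>I. (f i x)\<^sup>2 * v i x) sequentially"
  proof (rule uniform_limitI)
    fix e :: real assume "e > 0"
    then have "eventually (\<lambda>n. inverse (real (Suc n)) < e) sequentially"
      using order_tendstoD(2)[OF LIMSEQ_inverse_real_of_nat] by blast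
    then show "eventually (\<lambda>n. \<forall>x\<in>UNIV. dist (P n x) (\<Sum>\<^sub>\<infinity>i\<in>I. (f i x)\<^sup>2 * v i x) < e) sequentially"
      by eventually_elim (use bnd less_trans in blast)
  qed
  show ?thesis
    by (rule uniform_limit_theorem[OF _ ul]) (use Pc in auto)
qed

lemma tau_sum:
  fixes \<tau> :: "('x::topological_space \<Rightarrow> complex) \<Rightarrow> complex"
  assumes st: "is_state \<tau>" and G: "finite G"
    and wc: "\<And>g. g \<in> G \<Longrightarrow> continuous_on UNIV (w g)"
  shows "\<tau> (\<lambda>x. \<Sum>g\<in>G. w g x) = (\<Sum>g\<in>G. \<tau> (w g))"
  using G wc
proof (induction G rule: finite_induct)
  case empty
  have L: "\<forall>a b h k. continuous_on UNIV h \<longrightarrow> continuous_on UNIV k \<longrightarrow>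
        \<tau> (\<lambda>x. a * h x + b * k x) = a * \<tau> h + b * \<tau> k"
    using st unfolding is_state_def by blast
  have "\<tau> (\<lambda>x. 0 * 1 + 0 * 1) = 0 * \<tau> (\<lambda>x. 1) + 0 * \<tau> (\<lambda>x. 1)"
    using L[rule_format, of "\<lambda>x. 1" "\<lambda>x. 1" 0 0] by simp
  then show ?case by simp
next
  case (insert g G)
  have c: "continuous_on UNIV (\<lambda>x. \<Sum>g\<in>G. w g x)"
    using insert by (intro continuous_intros) auto
  have "\<tau> (\<lambda>x. 1 * w g x + 1 * (\<Sum>g\<in>G. w g x)) = 1 * \<tau> (w g) + 1 * \<tau> (\<lambda>x. \<Sum>g\<in>G. w g x)"
    using st insert.prems c unfolding is_state_def by blast
  then show ?case using insert by simp
qed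

theorem mainTheorem16:
  fixes act :: "'g::group_add \<Rightarrow> 'x::t2_space \<Rightarrow> 'x"
    and I :: "'i set" and s :: "'i \<Rightarrow> 'g" and f :: "'i \<Rightarrow> 'x \<Rightarrow> real"
    and \<tau> :: "('x \<Rightarrow> complex) \<Rightarrow> complex"
  assumes "countable (UNIV :: 'g set)"
    and "compact (UNIV :: 'x set)"
    and "action_by_homeos act"
    and "minimal_action act"
    and "gen_prob_measure I s f"
    and "full_support I s f"
    and "stationary_state act I s f \<tau>"
  shows "faithful_state \<tau>"
proof -
  note cpt = assms(2)
  have actc: "\<And>g. continuous_on UNIV (act g)" using assms(3) unfolding action_by_homeos_def by blast
  have fc: "\<And>i. i \<in> I \<Longrightarrow> continuous_on UNIV (f i)"
    and fpos: "\<And>i x. i \<in> I \<Longrightarrow> f i x \<ge> 0"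
    and hs: "\<And>x. ((\<lambda>i. (f i x)\<^sup>2) has_sum 1) I"
    using assms(5) unfolding gen_prob_measure_def by auto
  have st: "is_state \<tau>" and stat: "\<And>h. continuous_on UNIV h \<Longrightarrow> \<tau> (mu_apply act I s f h) = \<tau> h"
    using assms(7) unfolding stationary_state_def by auto
  have lin: "\<And>a b h k. continuous_on UNIV h \<Longrightarrow> continuous_on UNIV k \<Longrightarrow>
        \<tau> (\<lambda>x. a * h x + b * k x) = a * \<tau> h + b * \<tau> k"
    and posi: "\<And>h. continuous_on UNIV h \<Longrightarrow> (\<forall>x. Im (h x) = 0 \<and> Re (h x) \<ge> 0) \<Longrightarrow>
        Im (\<tau> h) = 0 \<and> Re (\<tau> h) \<ge> 0"
    and unit: "\<tau> (\<lambda>x. 1) = 1"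
    using st unfolding is_state_def by auto
  have posr: "Im (\<tau> (\<lambda>x. complex_of_real (u x))) = 0 \<and> Re (\<tau> (\<lambda>x. complex_of_real (u x))) \<ge> 0"
    if "continuous_on UNIV u" "\<And>x. u x \<ge> 0" for u
    using that by (intro posi) (auto intro: continuous_intros)
  show ?thesis unfolding faithful_state_def
  proof (intro allI impI)
    fix h :: "'x \<Rightarrow> complex"
    assume hc: "continuous_on UNIV h" and h0: "\<tau> (\<lambda>x. cnj (h x) * h x) = 0"
    define k where "k x = (cmod (h x))\<^sup>2" for x
    have kc: "continuous_on UNIV k" unfolding k_def using hc by (intro continuous_intros)
    have k0: "k x \<ge> 0" for x unfolding k_def by simp
    have Ck: "(\<lambda>x. complex_of_real (k x)) = (\<lambda>x. cnj (h x) * h x)"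
      unfolding k_def by (rule ext) (simp only: complex_norm_square mult.commute)
    have tk: "\<tau> (\<lambda>x. complex_of_real (k x)) = 0" using h0 Ck by simp
    obtain xm where xm: "\<And>y. k y \<le> k xm"
      using compact_attains_sup[OF compact_continuous_image[OF kc cpt]] by auto
    define B where "B = k xm"
    have trans0: "\<tau> (\<lambda>x. complex_of_real (k (act (-g) x))) = 0" for g
    proof -
      obtain \<delta> where \<delta>: "\<delta> > 0" "\<And>x. (\<Sum>\<^sub>\<infinity>i\<in>{i\<in>I. s i = g}. (f i x)\<^sup>2) \<ge> \<delta>"
        using assms(6) unfolding full_support_def by blast
      define v where "v i x = k (act (- s i) x)" for i x
      have vc: "continuous_on UNIV (v i)" for i
        unfolding v_def by (rule continuous_on_compose2[OF kc actc]) auto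
      have vb: "0 \<le> v i x \<and> v i x \<le> B" for i x unfolding v_def B_def using k0 xm by auto
      define M where "M x = (\<Sum>\<^sub>\<infinity>i\<in>I. (f i x)\<^sup>2 * v i x)" for x
      have Mc: "continuous_on UNIV M"
        unfolding M_def by (rule cont_mu[OF cpt fc hs vc vb])
      have Msum: "(\<lambda>i. (f i x)\<^sup>2 * v i x) summable_on I" for x
        using tail_bound(1)[OF hs[of x], of "\<lambda>i. v i x" B "{}"] vb by auto
      have mu: "mu_apply act I s f (\<lambda>x. complex_of_real (k x)) = (\<lambda>x. complex_of_real (M x))"
      proof (rule ext)
        fix x
        have "(\<lambda>i. complex_of_real (f i x) * translate act (s i) (\<lambda>x. complex_of_real (k x)) x * complex_of_real (f i x))
             = (\<lambda>i. complex_of_real ((f i x)\<^sup>2 * v i x))"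
          by (rule ext) (simp add: translate_def v_def power2_eq_square)
        moreover have "((\<lambda>i. complex_of_real ((f i x)\<^sup>2 * v i x)) has_sum complex_of_real (M x)) I"
          unfolding M_def by (rule has_sum_of_real) (use Msum in auto)
        ultimately show "mu_apply act I s f (\<lambda>x. complex_of_real (k x)) x = complex_of_real (M x)"
          unfolding mu_apply_def by (simp add: infsumI)
      qed
      have tM: "\<tau> (\<lambda>x. complex_of_real (M x)) = 0"
        using stat[of "\<lambda>x. complex_of_real (k x)"] kc tk mu by (auto intro: continuous_intros)
      define T where "T x = k (act (-g) x)" for x
      have Tc: "continuous_on UNIV T" unfolding T_def by (rule continuous_on_compose2[OF kc actc]) auto
      have MT: "\<delta> * T x \<le> M x" for x
      proof -
        have "\<delta> * T x \<le> (\<Sum>\<^sub>\<infinity>i\<in>{i\<in>I. s i = g}. (f i x)\<^sup>2) * T x"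
          using \<delta>(2)[of x] k0 unfolding T_def by (intro mult_right_mono) auto
        also have "\<dots> = (\<Sum>\<^sub>\<infinity>i\<in>{i\<in>I. s i = g}. (f i x)\<^sup>2 * T x)"
          by (rule infsum_cmult_left'[symmetric])
        also have "\<dots> = (\<Sum>\<^sub>\<infinity>i\<in>{i\<in>I. s i = g}. (f i x)\<^sup>2 * v i x)"
          by (rule infsum_cong) (simp add: T_def v_def)
        also have "\<dots> \<le> M x" unfolding M_def
          by (rule infsum_mono_neutral) (use Msum summable_on_subset[OF Msum] vb in auto)
        finally show ?thesis .
      qed
      have "Im (\<tau> (\<lambda>x. complex_of_real (M x - \<delta> * T x))) = 0 \<and> Re (\<tau> (\<lambda>x. complex_of_real (M x - \<delta> * T x))) \<ge> 0"
      proof (rule posr)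
        show "continuous_on UNIV (\<lambda>x. M x - \<delta> * T x)"
          by (intro continuous_on_diff continuous_on_mult continuous_on_const Mc Tc)
      qed (use MT in auto)
      moreover have "(\<lambda>x. complex_of_real (M x - \<delta> * T x)) = (\<lambda>x. 1 * complex_of_real (M x) + (- complex_of_real \<delta>) * complex_of_real (T x))"
        by (rule ext) simp
      moreover have "\<tau> (\<lambda>x. 1 * complex_of_real (M x) + (- complex_of_real \<delta>) * complex_of_real (T x))
          = 1 * \<tau> (\<lambda>x. complex_of_real (M x)) + (- complex_of_real \<delta>) * \<tau> (\<lambda>x. complex_of_real (T x))"
        using Mc Tc by (intro lin) (auto intro: continuous_intros)
      ultimately have "Re (- complex_of_real \<delta> * \<tau> (\<lambda>x. complex_of_real (T x))) \<ge> 0" using tM by simp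
      then have r1: "Re (\<tau> (\<lambda>x. complex_of_real (T x))) \<le> 0" using \<delta>(1)
        by (simp add: mult_le_0_iff)
      have r2: "Im (\<tau> (\<lambda>x. complex_of_real (T x))) = 0 \<and> Re (\<tau> (\<lambda>x. complex_of_real (T x))) \<ge> 0"
        using Tc k0 unfolding T_def by (intro posr) (auto simp: T_def)
      show ?thesis using r1 r2 unfolding T_def by (simp add: complex_eq_iff)
    qed
    show "h = (\<lambda>x. 0)"
    proof (rule ccontr)
      assume "h \<noteq> (\<lambda>x. 0)"
      then obtain x0 where "h x0 \<noteq> 0" by auto
      then have kx0: "k x0 > 0" unfolding k_def by simp
      define c where "c = k x0 / 2"
      have c: "c > 0" "c < k x0" using kx0 unfolding c_def by auto
      define V where "V g = {y. c < k (act g y)}" for g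
      have Vo: "open (V g)" for g unfolding V_def
        by (rule open_Collect_less) (auto intro: continuous_intros continuous_on_compose2[OF kc actc])
      have U: "open {y. c < k y}" by (rule open_Collect_less) (auto intro: continuous_intros kc)
      have cov: "UNIV \<subseteq> \<Union>(range V)"
      proof
        fix y :: 'x
        have "x0 \<in> closure (range (\<lambda>g. act g y))" using assms(4) unfolding minimal_action_def by blast
        then have "{y. c < k y} \<inter> closure (range (\<lambda>g. act g y)) \<noteq> {}" using c by auto
        then have "{y. c < k y} \<inter> range (\<lambda>g. act g y) \<noteq> {}" using open_Int_closure_eq_empty[OF U] by blast
        then obtain g where "c < k (act g y)" by auto
        then show "y \<in> \<Union>(range V)" unfolding V_def by auto
      qed
      obtain T' where T': "T' \<subseteq> range V" "finite T'" "UNIV \<subseteq> \<Union>T'"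
        using compactE[OF cpt cov] Vo by blast
      obtain G where G: "finite G" "T' = V ` G"
        using finite_subset_image[OF T'(2) T'(1)] by blast
      define S where "S y = (\<Sum>g\<in>G. k (act g y))" for y
      have Sc: "continuous_on UNIV S" unfolding S_def
        by (intro continuous_intros continuous_on_compose2[OF kc actc]) auto
      have Sge: "S y \<ge> c" for y
      proof -
        obtain g where g: "g \<in> G" "y \<in> V g" using T'(3) G(2) by blast
        have "c \<le> k (act g y)" using g unfolding V_def by auto
        also have "\<dots> \<le> S y" unfolding S_def using g G(1) k0
          by (intro member_le_sum) auto
        finally show ?thesis .
      qed
      have tS: "\<tau> (\<lambda>y. complex_of_real (S y)) = 0"
      proof -
        have "\<tau> (\<lambda>y. complex_of_real (S y)) = \<tau> (\<lambda>y. \<Sum>g\<in>G. complex_of_real (k (act g y)))"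
          unfolding S_def by simp
        also have "\<dots> = (\<Sum>g\<in>G. \<tau> (\<lambda>y. complex_of_real (k (act g y))))"
          by (rule tau_sum[OF st G(1)]) (auto intro: continuous_intros continuous_on_compose2[OF kc actc])
        also have "\<dots> = 0"
          using trans0[of "- _"] by simp
        finally show ?thesis .
      qed
      have "Im (\<tau> (\<lambda>x. complex_of_real (S x - c))) = 0 \<and> Re (\<tau> (\<lambda>x. complex_of_real (S x - c))) \<ge> 0"
        using Sge Sc by (intro posr) (auto intro: continuous_intros)
      moreover have "(\<lambda>x. complex_of_real (S x - c)) = (\<lambda>x. 1 * complex_of_real (S x) + (- complex_of_real c) * 1)"
        by (rule ext) simp
      moreover have "\<tau> (\<lambda>x. 1 * complex_of_real (S x) + (- complex_of_real c) * 1)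
          = 1 * \<tau> (\<lambda>x. complex_of_real (S x)) + (- complex_of_real c) * \<tau> (\<lambda>x. 1)"
        using Sc by (intro lin) (auto intro: continuous_intros)
      ultimately show False using tS unit c by simp
    qed
  qed
qed

end
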